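(* In the setting of problem (CP1) and the prox-ADC method described in the context, suppose Assumptions 1–4 hold. Then (a) the subproblem defining $x^{k,i+1}$ is feasible for all $k,i\in\mathbb{N}$; (b) for every $k\in\mathbb{N}$ the smallest index $i$ for which the inner stopping conditions hold, denoted $i_k$, is finite.
   Context: Problem (CP1): integers $0\le m_1\le m$; $f_p:\mathbb{R}^n\to\mathbb{R}$; $\varphi_p:\mathbb{R}\to\mathbb{R}$ convex for $p\le m_1$; $\varphi_p=\delta_{(-\infty,0]}$ for $p>m_1$; minimize $\sum_{p\le m_1}\varphi_p(f_p(x))$ s.t. $f_p(x)\le0$, $p>m_1$. $I_1=\{p:\varphi_p$ nondecreasing$\}$, $I_2=\{1,\dots,m\}\setminus I_1$. Monotonic decomposition $\varphi_p=\varphi_p^\uparrow+\varphi_p^\downarrow$: if $\varphi_p$ nondecreasing, $\varphi_p^\uparrow=\varphi_p,\varphi_p^\downarrow=0$; if nonincreasing, $\varphi_p^\uparrow=0,\varphi_p^\downarrow=\varphi_p$; otherwise with a minimizer $z^*$, $\varphi^\uparrow_p=\varphi_p(z^* )$ for $z\le z^*$, $\varphi_p(z)$ for $z>z^*$; $\varphi_p^\downarrow=\varphi_p(z)-\varphi_p(z^* )$ for $z\le z^*$, $0$ for $z>z^*$. Assumption 1: for each $p$, $f_p^k=g_p^k-h_p^k$ with $g_p^k,h_p^k:\mathbb{R}^n\to\mathbb{R}$ convex, $f_p^k$ epi-converges to $f_p$; $-\infty<\liminf_{x'\to x,k\to\infty}f_p^k(x')\le\limsup_{x'\to x,k\to\infty}f_p^k(x')<\infty$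 for all $x$; $\varphi_p\circ f_p^k$ epi-converges to $\varphi_p\circ f_p$. Assumption 2: with $X^k=\{x:f_p^k(x)\le0,\ p=m_1+1..m\}$ and $\alpha_p^k=\sup_{x\in X^k}[f_p^{k+1}(x)-f_p^k(x)]_+$, there exist $x^0$ and nonnegative $\{\widehat\alpha_p^k\}_k$ ($p>m_1$) with $\alpha_p^k\le\widehat\alpha_p^k$, $\sum_{k'}\widehat\alpha_p^{k'}<\infty$ and $f_p^0(x^0)\le-\sum_{k'=0}^\infty\widehat\alpha_p^{k'}$; set $\widehat\alpha_p^k=0$ for $p\le m_1$. Assumption 3: for each $k$ there is $\ell_k>0$ with $\min\{\mathbb H(\partial g_p^k(x),\partial g_p^k(x')),\mathbb H(\partial h_p^k(x),\partial h_p^k(x'))\}\le\ell_k\|x-x'\|$ for all $x,x'$ and all $p$ ($\mathbb H$ = Hausdorff distance). Assumption 4: for each $k$, $\sum_{p\le m_1}\varphi_p(f^k_p(x))+\sum_{p>m_1}\delta_{(-\infty,0]}(f_p^k(x))$ is level-bounded. Method: choose $\lambda>0$ and positive $\epsilon_k\downarrow0$, $\delta_k\downarrow0$ with $\delta_k/(\lambda+\ell_k)\downarrow0$; $\sigma_p^k=\sum_{k'\ge k}\widehat\alpha_p^{k'}$. For a point $y$ pick $a_p\in\partial h_p^k(y)$, $b_p\in\partial g_p^k(y)$ and set $f_p^{k,\mathrm{up}}(x;y)=g_p^k(x)-h_p^k(y)-a_p^\top(x-y)+\sigma_p^k$, $f_p^{k,\mathrm{lo}}(x;y)=g_p^k(y)+b_p^\top(x-y)-h_p^k(x)$,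 and for $p\le m_1$, $\widehat F_p^k(x;y)=\varphi_p^\uparrow(f_p^{k,\mathrm{up}}(x;y))+\varphi_p^\downarrow(f_p^{k,\mathrm{lo}}(x;y))$. For $k=0,1,\dots$: $x^{k,0}=x^k$; for $i=0,1,\dots$: $x^{k,i+1}=\operatorname{argmin}_x\{\sum_{p\le m_1}\widehat F_p^k(x;x^{k,i})+\tfrac\lambda2\|x-x^{k,i}\|^2:\ f_p^{k,\mathrm{up}}(x;x^{k,i})\le0,\ p>m_1\}$; stop the inner loop (with $i_k=i$) when $f_p^{k,\mathrm{up}}(x^{k,i+1};x^{k,i})\le f_p^k(x^{k,i+1})+\sigma_p^k+\epsilon_k$ for all $p$, $f_p^{k,\mathrm{lo}}(x^{k,i+1};x^{k,i})\ge f_p^k(x^{k,i+1})-\epsilon_k$ for $p\in I_2$, and $\|x^{k,i+1}-x^{k,i}\|\le\delta_k/(\lambda+\ell_k)$; then set $x^{k+1}=x^{k,i_k}$. *)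

theory Defs
  imports "HOL-Analysis.Analysis" "HOL-Library.Liminf_Limsup"
begin

definition subdiff :: "('a::real_inner \<Rightarrow> real) \<Rightarrow> 'a \<Rightarrow> 'a set" where
  "subdiff f x = {v. \<forall>y. f x + v \<bullet> (y - x) \<le> f y}"

definition hausdorff_dist :: "'a::metric_space set \<Rightarrow> 'a set \<Rightarrow> ereal" where
  "hausdorff_dist A B =
     max (SUP a\<in>A. ereal (infdist a B)) (SUP b\<in>B. ereal (infdist b A))"

text \<open>Epi-convergence of a sequence of extended-real-valued functions
  (sequential characterisation, Rockafellar--Wets Prop. 7.2).\<close>
definition epi_converges :: "(nat \<Rightarrow> 'a::metric_space \<Rightarrow> ereal) \<Rightarrow> ('a \<Rightarrow> ereal) \<Rightarrow> bool" where
  "epi_converges F G \<longleftrightarrow>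
     (\<forall>x. (\<forall>xs. xs \<longlonglongrightarrow> x \<longrightarrow> G x \<le> liminf (\<lambda>k. F k (xs k)))
        \<and> (\<exists>xs. xs \<longlonglongrightarrow> x \<and> limsup (\<lambda>k. F k (xs k)) \<le> G x))"

definition ind_nonpos :: "real \<Rightarrow> ereal" where
  "ind_nonpos t = (if t \<le> 0 then 0 else \<infinity>)"

definition level_bounded :: "('a::metric_space \<Rightarrow> ereal) \<Rightarrow> bool" where
  "level_bounded F \<longleftrightarrow> (\<forall>c::real. bounded {x. F x \<le> ereal c})"

definition phi_up :: "(real \<Rightarrow> real) \<Rightarrow> real \<Rightarrow> real \<Rightarrow> real" where
  "phi_up \<phi> z t =
     (if mono \<phi> then \<phi> t else if antimono \<phi> then 0
      else if t \<le> z then \<phi> z else \<phi> t)"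

definition phi_down :: "(real \<Rightarrow> real) \<Rightarrow> real \<Rightarrow> real \<Rightarrow> real" where
  "phi_down \<phi> z t =
     (if mono \<phi> then 0 else if antimono \<phi> then \<phi> t
      else if t \<le> z then \<phi> t - \<phi> z else 0)"

end

theory Submission
  imports Defs
begin


lemma conv_up:
  fixes \<phi> :: "real \<Rightarrow> real"
  assumes c: "convex_on UNIV \<phi>" and mn: "\<forall>t. \<phi> z \<le> \<phi> t" and zs: "z \<le> s" and st: "s \<le> t"
  shows "\<phi> s \<le> \<phi> t"
proof (cases "s = t")
  case True then show ?thesis by simp
next
  case False
  then have tz: "z < t" using zs st by simp
  define th where "th = (s - z) / (t - z)"
  have th0: "0 \<le> th" "th \<le> 1" using zs st tz by (auto simp: th_def divide_simps)
  have "th * (t - z) = s - z" using tz by (simp add: th_def)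
  then have eq: "(1 - th) *\<^sub>R z + th *\<^sub>R t = s" by (simp add: algebra_simps)
  have "\<phi> s \<le> (1 - th) * \<phi> z + th * \<phi> t"
    using convex_onD[OF c th0] eq by (metis UNIV_I)
  also have "\<dots> \<le> (1 - th) * \<phi> t + th * \<phi> t"
    using mn th0 by (intro add_mono mult_left_mono) auto
  finally show ?thesis by (simp add: algebra_simps)
qed

lemma conv_down:
  fixes \<phi> :: "real \<Rightarrow> real"
  assumes c: "convex_on UNIV \<phi>" and mn: "\<forall>t. \<phi> z \<le> \<phi> t" and zs: "s \<le> z" and st: "t \<le> s"
  shows "\<phi> s \<le> \<phi> t"
proof (cases "s = t")
  case True then show ?thesis by simp
next
  case False
  then have tz: "t < z" using zs st by simp
  define th where "th = (z - s) / (z - t)"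
  have th0: "0 \<le> th" "th \<le> 1" using zs st tz by (auto simp: th_def divide_simps)
  have "th * (z - t) = z - s" using tz by (simp add: th_def)
  then have eq: "(1 - th) *\<^sub>R z + th *\<^sub>R t = s" by (simp add: algebra_simps)
  have "\<phi> s \<le> (1 - th) * \<phi> z + th * \<phi> t"
    using convex_onD[OF c th0] eq by (metis UNIV_I)
  also have "\<dots> \<le> (1 - th) * \<phi> t + th * \<phi> t"
    using mn th0 by (intro add_mono mult_left_mono) auto
  finally show ?thesis by (simp add: algebra_simps)
qed

lemma phi_up_mono:
  assumes c: "convex_on UNIV \<phi>" and mn: "\<not> mono \<phi> \<and> \<not> antimono \<phi> \<longrightarrow> (\<forall>t. \<phi> z \<le> \<phi> t)"
    and st: "s \<le> t"
  shows "phi_up \<phi> z s \<le> phi_up \<phi> z t"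
proof -
  consider "mono \<phi>" | "\<not> mono \<phi>" "antimono \<phi>" | "\<not> mono \<phi>" "\<not> antimono \<phi>" by blast
  then show ?thesis
  proof cases
    case 1 then show ?thesis using st by (simp add: phi_up_def monoD)
  next
    case 2 then show ?thesis by (simp add: phi_up_def)
  next
    case 3
    then have m: "\<forall>t. \<phi> z \<le> \<phi> t" using mn by blast
    show ?thesis using 3 st conv_up[OF c m, of s t] m by (auto simp: phi_up_def)
  qed
qed

lemma phi_down_anti:
  assumes c: "convex_on UNIV \<phi>" and mn: "\<not> mono \<phi> \<and> \<not> antimono \<phi> \<longrightarrow> (\<forall>t. \<phi> z \<le> \<phi> t)"
    and st: "s \<le> t"
  shows "phi_down \<phi> z t \<le> phi_down \<phi> z s"
proof -
  consider "mono \<phi>" | "\<not> mono \<phi>" "antimono \<phi>" | "\<not> mono \<phi>" "\<not> antimono \<phi>" by blast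
  then show ?thesis
  proof cases
    case 1 then show ?thesis by (simp add: phi_down_def)
  next
    case 2 then show ?thesis using st by (simp add: phi_down_def antimonoD)
  next
    case 3
    then have m: "\<forall>t. \<phi> z \<le> \<phi> t" using mn by blast
    show ?thesis using 3 st conv_down[OF c m, of t s] m by (auto simp: phi_down_def)
  qed
qed

lemma phi_up_down: "phi_up \<phi> z t + phi_down \<phi> z t = \<phi> t"
  by (simp add: phi_up_def phi_down_def)

lemma no_small_step:
  fixes x :: "nat \<Rightarrow> 'a::real_normed_vector" and F :: "'a \<Rightarrow> real"
  assumes desc: "\<forall>i. F (x (Suc i)) + c * (norm (x (Suc i) - x i))\<^sup>2 \<le> F (x i)"
    and c: "0 < c" and lb: "\<forall>i. L \<le> F (x i)" and d: "0 < d"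
  shows "\<exists>i. norm (x (Suc i) - x i) < d"
proof (rule ccontr)
  assume "\<not> ?thesis"
  then have big: "\<forall>i. d \<le> norm (x (Suc i) - x i)" by (auto simp: not_less)
  have "\<forall>i. c * d\<^sup>2 \<le> c * (norm (x (Suc i) - x i))\<^sup>2"
    using big d c by (auto intro!: mult_left_mono power_mono)
  then have st: "\<forall>i. F (x (Suc i)) \<le> F (x i) - c * d\<^sup>2" using desc by (smt (verit))
  have "F (x n) \<le> F (x 0) - real n * (c * d\<^sup>2)" for n
  proof (induction n)
    case 0 then show ?case by simp
  next
    case (Suc n) then show ?case using st[rule_format, of n] by (simp add: algebra_simps)
  qed
  moreover have pos: "0 < c * d\<^sup>2" using c d by simp
  obtain n :: nat where "(F (x 0) - L) / (c * d\<^sup>2) < real n" using reals_Archimedean2 by blast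
  then have "F (x 0) - L < real n * (c * d\<^sup>2)" using pos by (simp add: divide_simps)
  ultimately show False using lb[rule_format, of n] by (smt (verit))
qed

lemma uc_finite:
  fixes G :: "nat \<Rightarrow> 'a::euclidean_space \<Rightarrow> real"
  assumes fin: "finite P" and c: "\<forall>p\<in>P. continuous_on UNIV (G p)" and K: "compact K" and e: "0 < e"
  shows "\<exists>d>0. \<forall>p\<in>P. \<forall>x\<in>K. \<forall>y\<in>K. dist y x < d \<longrightarrow> \<bar>G p y - G p x\<bar> < e"
  using fin c
proof (induction P rule: finite_induct)
  case empty then show ?case by (intro exI[of _ 1]) auto
next
  case (insert q P)
  then obtain d1 where d1: "d1 > 0" "\<forall>p\<in>P. \<forall>x\<in>K. \<forall>y\<in>K. dist y x < d1 \<longrightarrow> \<bar>G p y - G p x\<bar> < e"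
    by auto
  have "continuous_on K (G q)" using insert(4) continuous_on_subset by blast
  then have "uniformly_continuous_on K (G q)" using K compact_uniformly_continuous by blast
  then obtain d2 where d2: "d2 > 0" "\<forall>x\<in>K. \<forall>y\<in>K. dist y x < d2 \<longrightarrow> dist (G q y) (G q x) < e"
    unfolding uniformly_continuous_on_def using e by blast
  show ?case using d1 d2
    by (intro exI[of _ "min d1 d2"]) (auto simp: dist_real_def)
qed


theorem theorem4p2:
  fixes m1 m :: nat
    and phi :: "nat \<Rightarrow> real \<Rightarrow> real"
    and zs :: "nat \<Rightarrow> real"
    and f :: "nat \<Rightarrow> 'a::euclidean_space \<Rightarrow> real"
    and g h :: "nat \<Rightarrow> nat \<Rightarrow> 'a \<Rightarrow> real"
    and ahat :: "nat \<Rightarrow> nat \<Rightarrow> real"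
    and x0 :: 'a
    and ell :: "nat \<Rightarrow> real"
    and lam :: real
    and eps delta :: "nat \<Rightarrow> real"
    and a b :: "nat \<Rightarrow> nat \<Rightarrow> nat \<Rightarrow> 'a"
    and xo :: "nat \<Rightarrow> 'a"
    and xx :: "nat \<Rightarrow> nat \<Rightarrow> 'a"
  assumes fk_def: "fk = (\<lambda>k p x. g k p x - h k p x)"
    and Phi_def: "Phi = (\<lambda>p t. if p \<le> m1 then ereal (phi p t) else ind_nonpos t)"
    and I1_def: "I1 = {p\<in>{1..m}. mono (Phi p)}"
    and I2_def: "I2 = {1..m} - I1"
    and Xk_def: "Xk = (\<lambda>k. {x. \<forall>p\<in>{m1<..m}. fk k p x \<le> 0})"
    and alph_def: "alph = (\<lambda>p k. (SUP x\<in>Xk k. ereal (max 0 (fk (Suc k) p x - fk k p x))))"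
    and sig_def: "sig = (\<lambda>p k. (\<Sum>j. ahat p (k + j)))"
    and fup_def: "fup = (\<lambda>k i p x. g k p x - h k p (xx k i) - a k i p \<bullet> (x - xx k i) + sig p k)"
    and flo_def: "flo = (\<lambda>k i p x. g k p (xx k i) + b k i p \<bullet> (x - xx k i) - h k p x)"
    and obj_def: "obj = (\<lambda>k i x. (\<Sum>p\<in>{1..m1}. phi_up (phi p) (zs p) (fup k i p x)
                                    + phi_down (phi p) (zs p) (flo k i p x))
                       + lam / 2 * (norm (x - xx k i))\<^sup>2)"
    and feas_def: "feas = (\<lambda>k i. {x. \<forall>p\<in>{m1<..m}. fup k i p x \<le> 0})"
    and stopc_def: "stopc = (\<lambda>k i.
            (\<forall>p\<in>{1..m}. fup k i p (xx k (Suc i)) \<le> fk k p (xx k (Suc i)) + sig p k + eps k)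
          \<and> (\<forall>p\<in>I2. flo k i p (xx k (Suc i)) \<ge> fk k p (xx k (Suc i)) - eps k)
          \<and> norm (xx k (Suc i) - xx k i) \<le> delta k / (lam + ell k))"
    and m1_le: "m1 \<le> m"
    \<comment> \<open>problem data\<close>
    and phi_convex: "\<forall>p\<in>{1..m1}. convex_on UNIV (phi p)"
    and zs_min: "\<forall>p\<in>{1..m1}. \<not> mono (phi p) \<and> \<not> antimono (phi p)
                   \<longrightarrow> (\<forall>t. phi p (zs p) \<le> phi p t)"
    \<comment> \<open>Assumption 1\<close>
    and A1_convex: "\<forall>k. \<forall>p\<in>{1..m}. convex_on UNIV (g k p) \<and> convex_on UNIV (h k p)"
    and A1_epi: "\<forall>p\<in>{1..m}. epi_converges (\<lambda>k x. ereal (fk k p x)) (\<lambda>x. ereal (f p x))"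
    and A1_bdd: "\<forall>p\<in>{1..m}. \<forall>x.
          - \<infinity> < Liminf (sequentially \<times>\<^sub>F nhds x) (\<lambda>(k, x'). ereal (fk k p x'))
        \<and> Limsup (sequentially \<times>\<^sub>F nhds x) (\<lambda>(k, x'). ereal (fk k p x')) < \<infinity>"
    and A1_epi_comp: "\<forall>p\<in>{1..m}. epi_converges (\<lambda>k x. Phi p (fk k p x)) (\<lambda>x. Phi p (f p x))"
    \<comment> \<open>Assumption 2\<close>
    and A2_zero: "\<forall>p k. p \<le> m1 \<longrightarrow> ahat p k = 0"
    and A2_nonneg: "\<forall>p\<in>{m1<..m}. \<forall>k. 0 \<le> ahat p k"
    and A2_le: "\<forall>p\<in>{m1<..m}. \<forall>k. alph p k \<le> ereal (ahat p k)"
    and A2_summable: "\<forall>p\<in>{m1<..m}. summable (ahat p)"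
    and A2_x0: "\<forall>p\<in>{m1<..m}. fk 0 p x0 \<le> - (\<Sum>k. ahat p k)"
    \<comment> \<open>Assumption 3\<close>
    and A3: "\<forall>k. 0 < ell k \<and> (\<forall>p\<in>{1..m}. \<forall>x x'.
          min (hausdorff_dist (subdiff (g k p) x) (subdiff (g k p) x'))
              (hausdorff_dist (subdiff (h k p) x) (subdiff (h k p) x'))
            \<le> ereal (ell k * norm (x - x')))"
    \<comment> \<open>Assumption 4\<close>
    and A4: "\<forall>k. level_bounded (\<lambda>x. \<Sum>p\<in>{1..m}. Phi p (fk k p x))"
    \<comment> \<open>parameters of the method\<close>
    and lam_pos: "0 < lam"
    and eps_pos: "\<forall>k. 0 < eps k" and eps_dec: "decseq eps" and eps_lim: "eps \<longlonglongrightarrow> 0"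
    and delta_pos: "\<forall>k. 0 < delta k" and delta_dec: "decseq delta" and delta_lim: "delta \<longlonglongrightarrow> 0"
    and ratio_dec: "decseq (\<lambda>k. delta k / (lam + ell k))"
    and ratio_lim: "(\<lambda>k. delta k / (lam + ell k)) \<longlonglongrightarrow> 0"
    \<comment> \<open>the iterates of the method\<close>
    and subgrad: "\<forall>k i. \<forall>p\<in>{1..m}.
          a k i p \<in> subdiff (h k p) (xx k i) \<and> b k i p \<in> subdiff (g k p) (xx k i)"
    and start: "xo 0 = x0"
    and inner_start: "\<forall>k. xx k 0 = xo k"
    and inner_step: "\<forall>k i. feas k i \<noteq> {} \<longrightarrow>
          xx k (Suc i) \<in> feas k i \<and> (\<forall>x\<in>feas k i. obj k i (xx k (Suc i)) \<le> obj k i x)"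
    and outer_step: "\<forall>k. xo (Suc k) = xx k (LEAST i. stopc k i)"
  shows "(\<forall>k i. feas k i \<noteq> {}) \<and> (\<forall>k. \<exists>i. stopc k i)"
proof -
  have sig0: "\<And>p k. p \<le> m1 \<Longrightarrow> sig p k = 0" using A2_zero sig_def by simp
  have sigsum: "summable (\<lambda>j. ahat p (k + j))" if "p \<in> {m1<..m}" for p k
    using summable_ignore_initial_segment[OF A2_summable[rule_format, OF that], of k]
    by (simp add: add.commute)
  have signn: "0 \<le> sig p k" if "p \<in> {m1<..m}" for p k
    unfolding sig_def using sigsum[OF that] A2_nonneg that by (auto intro!: suminf_nonneg)
  have sigstep: "sig p k = ahat p k + sig p (Suc k)" if "p \<in> {m1<..m}" for p k
    using suminf_split_head[OF sigsum[OF that, of k]] by (simp add: sig_def)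
  have fup_ge: "fk k p x + sig p k \<le> fup k i p x" if "p \<in> {1..m}" for k i p x
  proof -
    have "h k p (xx k i) + a k i p \<bullet> (x - xx k i) \<le> h k p x"
      using subgrad that by (auto simp: subdiff_def)
    then show ?thesis by (simp add: fup_def fk_def)
  qed
  have fup_at: "fup k i p (xx k i) = fk k p (xx k i) + sig p k" for k i p
    by (simp add: fup_def fk_def)
  have flo_le: "flo k i p x \<le> fk k p x" if "p \<in> {1..m}" for k i p x
  proof -
    have "g k p (xx k i) + b k i p \<bullet> (x - xx k i) \<le> g k p x"
      using subgrad that by (auto simp: subdiff_def)
    then show ?thesis by (simp add: flo_def fk_def)
  qed
  have flo_at: "flo k i p (xx k i) = fk k p (xx k i)" for k i p
    by (simp add: flo_def fk_def)
  have inner: "\<forall>j. \<forall>p\<in>{m1<..m}. fk k p (xx k j) + sig p k \<le> 0"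
    if base: "\<forall>p\<in>{m1<..m}. fk k p (xx k 0) + sig p k \<le> 0" for k
  proof
    fix j show "\<forall>p\<in>{m1<..m}. fk k p (xx k j) + sig p k \<le> 0"
    proof (induction j)
      case 0 then show ?case using base by simp
    next
      case (Suc j)
      have "xx k j \<in> feas k j" using Suc fup_at by (simp add: feas_def)
      then have mem: "xx k (Suc j) \<in> feas k j" using inner_step by blast
      show ?case
      proof
        fix p assume p: "p \<in> {m1<..m}"
        then have pm: "p \<in> {1..m}" using m1_le by auto
        have "fup k j p (xx k (Suc j)) \<le> 0" using mem p by (simp add: feas_def)
        then show "fk k p (xx k (Suc j)) + sig p k \<le> 0"
          using fup_ge[OF pm, of k "xx k (Suc j)" j] by linarith
      qed
    qed
  qed
  have feask: "\<forall>j. \<forall>p\<in>{m1<..m}. fk k p (xx k j) + sig p k \<le> 0" for k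
  proof (induction k)
    case 0
    show ?case
    proof (rule inner, intro ballI)
      fix p assume p: "p \<in> {m1<..m}"
      show "fk 0 p (xx 0 0) + sig p 0 \<le> 0"
      proof -
        have "fk 0 p x0 \<le> - (\<Sum>k. ahat p k)" using A2_x0 p by blast
        then show ?thesis using inner_start start by (simp add: sig_def)
      qed
    qed
  next
    case (Suc k)
    show ?case
    proof (rule inner, intro ballI)
      fix p assume p: "p \<in> {m1<..m}"
      define y where "y = xx k (LEAST i. stopc k i)"
      have y0: "xx (Suc k) 0 = y" using inner_start outer_step y_def by simp
      have yk: "\<forall>q\<in>{m1<..m}. fk k q y + sig q k \<le> 0" using Suc y_def by blast
      have "\<forall>q\<in>{m1<..m}. fk k q y \<le> 0"
      proof
        fix q assume q: "q \<in> {m1<..m}"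
        show "fk k q y \<le> 0" using yk[rule_format, OF q] signn[OF q, of k] by linarith
      qed
      then have "y \<in> Xk k" unfolding Xk_def by simp
      then have "ereal (max 0 (fk (Suc k) p y - fk k p y)) \<le> alph p k"
        unfolding alph_def by (rule SUP_upper[where f="\<lambda>x. ereal (max 0 (fk (Suc k) p x - fk k p x))"])
      also have "\<dots> \<le> ereal (ahat p k)" using A2_le p by blast
      finally have "fk (Suc k) p y - fk k p y \<le> ahat p k" by simp
      then show "fk (Suc k) p (xx (Suc k) 0) + sig p (Suc k) \<le> 0"
        unfolding y0 using yk[rule_format, OF p] sigstep[OF p, of k] by linarith
    qed
  qed
  have feasne: "\<forall>k i. feas k i \<noteq> {}"
  proof (intro allI)
    fix k i
    have "xx k i \<in> feas k i" using feask[of k] fup_at by (simp add: feas_def)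
    then show "feas k i \<noteq> {}" by blast
  qed
  have part_b: "\<exists>i. stopc k i" for k
  proof -
    define x where "x = xx k"
    define F where "F = (\<lambda>y. \<Sum>p\<in>{1..m1}. phi p (fk k p y))"
    have xfeas: "\<forall>p\<in>{m1<..m}. fk k p (x i) \<le> 0" for i
    proof
      fix p assume p: "p \<in> {m1<..m}"
      have "fk k p (x i) + sig p k \<le> 0" using feask[of k] p unfolding x_def by blast
      then show "fk k p (x i) \<le> 0" using signn[OF p, of k] by linarith
    qed
    have desc: "\<forall>i. F (x (Suc i)) + lam / 2 * (norm (x (Suc i) - x i))\<^sup>2 \<le> F (x i)"
    proof
      fix i
      have "x i \<in> feas k i" using feask[of k] fup_at by (simp add: feas_def x_def)
      then have le: "obj k i (x (Suc i)) \<le> obj k i (x i)" using inner_step unfolding x_def by blast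
      have e1: "obj k i (x i) = F (x i)"
        unfolding obj_def F_def x_def
        by (auto simp: fup_at flo_at sig0 phi_up_down intro!: sum.cong)
      have "F (x (Suc i)) = (\<Sum>p\<in>{1..m1}. phi_up (phi p) (zs p) (fk k p (x (Suc i)))
                                    + phi_down (phi p) (zs p) (fk k p (x (Suc i))))"
        unfolding F_def by (simp add: phi_up_down)
      also have "\<dots> \<le> (\<Sum>p\<in>{1..m1}. phi_up (phi p) (zs p) (fup k i p (x (Suc i)))
                                    + phi_down (phi p) (zs p) (flo k i p (x (Suc i))))"
      proof (rule sum_mono)
        fix p assume p: "p \<in> {1..m1}"
        then have pm: "p \<in> {1..m}" using m1_le by auto
        have c: "convex_on UNIV (phi p)" using phi_convex p by blast
        have z: "\<not> mono (phi p) \<and> \<not> antimono (phi p) \<longrightarrow> (\<forall>t. phi p (zs p) \<le> phi p t)"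
          using zs_min p by blast
        have "fk k p (x (Suc i)) \<le> fup k i p (x (Suc i))"
          using fup_ge[OF pm, of k "x (Suc i)" i] sig0[of p k] p by simp
        moreover have "flo k i p (x (Suc i)) \<le> fk k p (x (Suc i))" using flo_le[OF pm] .
        ultimately show "phi_up (phi p) (zs p) (fk k p (x (Suc i))) + phi_down (phi p) (zs p) (fk k p (x (Suc i)))
          \<le> phi_up (phi p) (zs p) (fup k i p (x (Suc i))) + phi_down (phi p) (zs p) (flo k i p (x (Suc i)))"
          by (intro add_mono phi_up_mono[OF c z] phi_down_anti[OF c z])
      qed
      finally have "F (x (Suc i)) + lam / 2 * (norm (x (Suc i) - x i))\<^sup>2 \<le> obj k i (x (Suc i))"
        unfolding obj_def x_def by simp
      then show "F (x (Suc i)) + lam / 2 * (norm (x (Suc i) - x i))\<^sup>2 \<le> F (x i)"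
        using le e1 by simp
    qed
    have Fdec: "F (x i) \<le> F (x 0)" for i
    proof (induction i)
      case (Suc i)
      have "0 \<le> lam / 2 * (norm (x (Suc i) - x i))\<^sup>2" using lam_pos by simp
      then show ?case using Suc desc[rule_format, of i] by linarith
    qed simp
    have A4fun: "(\<Sum>p\<in>{1..m}. Phi p (fk k p (x i))) = ereal (F (x i))" for i
    proof -
      have "(\<Sum>p\<in>{1..m}. Phi p (fk k p (x i)))
          = (\<Sum>p\<in>{1..m}. ereal (if p \<le> m1 then phi p (fk k p (x i)) else 0))"
        using xfeas[of i] by (intro sum.cong) (auto simp: Phi_def ind_nonpos_def)
      also have "\<dots> = ereal (\<Sum>p\<in>{1..m}. (if p \<le> m1 then phi p (fk k p (x i)) else 0))"
        by simp
      also have "(\<Sum>p\<in>{1..m}. (if p \<le> m1 then phi p (fk k p (x i)) else 0))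
           = (\<Sum>p\<in>{p\<in>{1..m}. p \<le> m1}. phi p (fk k p (x i)))"
        by (rule sym, rule sum.inter_filter) simp
      also have "{p\<in>{1..m}. p \<le> m1} = {1..m1}" using m1_le by auto
      finally show ?thesis by (simp add: F_def)
    qed
    have "bounded {y. (\<Sum>p\<in>{1..m}. Phi p (fk k p y)) \<le> ereal (F (x 0))}"
      using A4 unfolding level_bounded_def by blast
    moreover have "\<forall>i. x i \<in> {y. (\<Sum>p\<in>{1..m}. Phi p (fk k p y)) \<le> ereal (F (x 0))}"
      using A4fun Fdec by simp
    ultimately obtain R where R: "\<forall>i. norm (x i) \<le> R"
      unfolding bounded_iff by blast
    define K where "K = cball (0::'a) (R + 1)"
    have K: "compact K" by (simp add: K_def)
    have xK: "x i \<in> K" for i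
    proof -
      have "norm (x i) \<le> R" using R by blast
      then show ?thesis by (simp add: K_def)
    qed
    have cg: "\<forall>p\<in>{1..m}. continuous_on UNIV (g k p)"
      using A1_convex by (auto intro: convex_on_continuous)
    have ch: "\<forall>p\<in>{1..m}. continuous_on UNIV (h k p)"
      using A1_convex by (auto intro: convex_on_continuous)
    have cF: "continuous_on UNIV F"
    proof -
      have "continuous_on UNIV (\<lambda>y. phi p (fk k p y))" if p: "p \<in> {1..m1}" for p
      proof -
        have pm: "p \<in> {1..m}" using p m1_le by auto
        have "continuous_on UNIV (phi p)" using phi_convex p by (auto intro: convex_on_continuous)
        moreover have "continuous_on UNIV (fk k p)"
          unfolding fk_def using cg ch pm by (auto intro!: continuous_on_diff)
        ultimately show ?thesis using continuous_on_compose2 by fastforce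
      qed
      then show ?thesis unfolding F_def by (auto intro!: continuous_on_sum)
    qed
    have "compact (F ` K)" using K cF continuous_on_subset compact_continuous_image by blast
    then have "bounded (F ` K)" by (rule compact_imp_bounded)
    then obtain B where B: "\<forall>y\<in>F ` K. norm y \<le> B" unfolding bounded_iff by blast
    have lb: "\<forall>i. - B \<le> F (x i)"
    proof
      fix i
      have "norm (F (x i)) \<le> B" using B xK by blast
      then show "- B \<le> F (x i)" by simp
    qed
    define e where "e = eps k / 2"
    have e: "0 < e" using eps_pos by (simp add: e_def)
    obtain d1 where d1: "d1 > 0" "\<forall>p\<in>{1..m}. \<forall>u\<in>K. \<forall>v\<in>K. dist v u < d1 \<longrightarrow> \<bar>h k p v - h k p u\<bar> < e"
      using uc_finite[of "{1..m}" "h k", OF _ ch K e] by auto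
    obtain d2 where d2: "d2 > 0" "\<forall>p\<in>{1..m}. \<forall>u\<in>K. \<forall>v\<in>K. dist v u < d2 \<longrightarrow> \<bar>g k p v - g k p u\<bar> < e"
      using uc_finite[of "{1..m}" "g k", OF _ cg K e] by auto
    define r where "r = delta k / (lam + ell k)"
    have r: "0 < r" using delta_pos A3 lam_pos by (simp add: r_def add_pos_pos)
    define d0 where "d0 = min (min d1 d2) (min 1 r)"
    have d0: "0 < d0" using d1 d2 r by (simp add: d0_def)
    obtain i where i: "norm (x (Suc i) - x i) < d0"
      using no_small_step[OF desc _ lb d0] lam_pos by auto
    define u where "u = x (Suc i)"
    define v where "v = x i"
    define w where "w = 2 *\<^sub>R v - u"
    have uK: "u \<in> K" and vK: "v \<in> K" using xK by (simp_all add: u_def v_def)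
    have wK: "w \<in> K"
    proof -
      have "norm w \<le> norm v + norm (v - u)"
        unfolding w_def by (metis add_diff_eq norm_triangle_ineq scaleR_2)
      also have "\<dots> \<le> R + 1"
      proof -
        have "norm v \<le> R" using R by (simp add: v_def)
        moreover have "norm (v - u) < 1" using i unfolding u_def v_def d0_def
          by (simp add: norm_minus_commute)
        ultimately show ?thesis by linarith
      qed
      finally show ?thesis by (simp add: K_def)
    qed
    have duv: "dist u v < d0" "dist w v < d0" using i
      by (simp_all add: u_def v_def w_def dist_norm norm_minus_commute algebra_simps scaleR_2)
    have errh: "fup k i p u \<le> fk k p u + sig p k + eps k" if p: "p \<in> {1..m}" for p
    proof -
      have sg: "h k p v + a k i p \<bullet> (w - v) \<le> h k p w"
        using subgrad p by (auto simp: subdiff_def v_def x_def)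
      have wv: "w - v = - (u - v)" by (simp add: w_def algebra_simps scaleR_2)
      have "\<bar>h k p u - h k p v\<bar> < e" "\<bar>h k p w - h k p v\<bar> < e"
        using d1(2) p uK vK wK duv unfolding d0_def by auto
      moreover have "a k i p \<bullet> (w - v) = - (a k i p \<bullet> (u - v))" using wv by (simp add: inner_diff_right)
      moreover have "fup k i p u = fk k p u + sig p k + (h k p u - h k p v - a k i p \<bullet> (u - v))"
        by (simp add: fup_def fk_def v_def x_def)
      ultimately show ?thesis using sg unfolding e_def by linarith
    qed
    have errg: "fk k p u - eps k \<le> flo k i p u" if p: "p \<in> {1..m}" for p
    proof -
      have sg: "g k p v + b k i p \<bullet> (w - v) \<le> g k p w"
        using subgrad p by (auto simp: subdiff_def v_def x_def)
      have wv: "w - v = - (u - v)" by (simp add: w_def algebra_simps scaleR_2)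
      have "\<bar>g k p u - g k p v\<bar> < e" "\<bar>g k p w - g k p v\<bar> < e"
        using d2(2) p uK vK wK duv unfolding d0_def by auto
      moreover have "b k i p \<bullet> (w - v) = - (b k i p \<bullet> (u - v))" using wv by (simp add: inner_diff_right)
      moreover have "flo k i p u = fk k p u - (g k p u - g k p v - b k i p \<bullet> (u - v))"
        by (simp add: flo_def fk_def v_def x_def)
      ultimately show ?thesis using sg unfolding e_def by linarith
    qed
    have "stopc k i"
      unfolding stopc_def
    proof (intro conjI)
      show "\<forall>p\<in>{1..m}. fup k i p (xx k (Suc i)) \<le> fk k p (xx k (Suc i)) + sig p k + eps k"
        using errh by (simp add: u_def x_def)
      show "\<forall>p\<in>I2. fk k p (xx k (Suc i)) - eps k \<le> flo k i p (xx k (Suc i))"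
        using errg by (simp add: u_def x_def I2_def)
      show "norm (xx k (Suc i) - xx k i) \<le> delta k / (lam + ell k)"
        using i by (simp add: x_def d0_def r_def)
    qed
    then show ?thesis by blast
  qed
  show ?thesis using feasne part_b by blast
qed

end
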